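(* Let $E$ be an IL FS encoder with $s$ states whose Kraft matrix $K$ is irreducible, and let $L_{\max}=\max_{z\in\mathcal{Z},x\in\mathcal{X}}L[f(z,x)]$. Then for all $z,z'\in\mathcal{Z}$ and every positive integer $n$, $$(K^n)_{zz'}=\sum_{\{x^n\in\mathcal{X}^n:\ g(z,x^n)=z'\}}2^{-L[f(z,x^n)]}\le 2^{(s-1)L_{\max}}.$$ Consequently, for every $z\in\mathcal{Z}$ and every $n$, $$\sum_{x^n\in\mathcal{X}^n}2^{-L[f(z,x^n)]}\le s\cdot 2^{(s-1)L_{\max}},\qquad \sum_{z\in\mathcal{Z}}\sum_{x^n\in\mathcal{X}^n}2^{-L[f(z,x^n)]}\le s^2\cdot 2^{(s-1)L_{\max}}.$$
   Context: A finite-state (FS) encoder is a quintuple $E=(\mathcal{X},\mathcal{Y},\mathcal{Z},f,g)$, where $\mathcal{X}$ is a finite source alphabet of size $\alpha$, $\mathcal{Y}$ is a finite set of binary strings (possibly containing the empty string, of length $0$), $\mathcal{Z}$ is a finite set of $s$ states, $f:\mathcal{Z}\times\mathcal{X}\to\mathcal{Y}$ is the output function and $g:\mathcal{Z}\times\mathcal{X}\to\mathcal{Z}$ is the next-state function. For $z\in\mathcal{Z}$ and $x^n=(x_1,\dots,x_n)\in\mathcal{X}^n$, set $z_1=z$, $z_{i+1}=g(z_i,x_i)$; write $g(z,x^n)=z_{n+1}$ and let $f(z,x^n)$ denote the binary string obtained by concatenating $f(z_1,x_1),\dots,f(z_n,x_n)$; its length is $L[f(z,x^n)]=\sum_{i=1}^n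 L[f(z_i,x_i)]$, where $L(\cdot)$ denotes the length of a binary string. The encoder is information lossless (IL) if for every $z\in\mathcal{Z}$ and every $n\ge1$, the map $x^n\mapsto (f(z,x^n),g(z,x^n))$ is injective on $\mathcal{X}^n$. The Kraft matrix of $E$ is the $s\times s$ nonnegative matrix $K$ with entries $K_{zz'}=\sum_{\{x\in\mathcal{X}:\ g(z,x)=z'\}}2^{-L[f(z,x)]}$ (an empty sum is $0$). *)

theory Defs
  imports Complex_Main "HOL-Library.Cardinality"
begin

text \<open>An FS encoder: states of finite type 'z, source alphabet of finite type 'x,
  output function f (binary strings as bool lists), next-state function g.\<close>

fun fs_next :: "('z \<Rightarrow> 'x \<Rightarrow> 'z) \<Rightarrow> 'z \<Rightarrow> 'x list \<Rightarrow> 'z" where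
  "fs_next g z [] = z"
| "fs_next g z (x # xs) = fs_next g (g z x) xs"

fun fs_out :: "('z \<Rightarrow> 'x \<Rightarrow> bool list) \<Rightarrow> ('z \<Rightarrow> 'x \<Rightarrow> 'z) \<Rightarrow> 'z \<Rightarrow> 'x list \<Rightarrow> bool list" where
  "fs_out f g z [] = []"
| "fs_out f g z (x # xs) = f z x @ fs_out f g (g z x) xs"

definition info_lossless :: "('z \<Rightarrow> 'x \<Rightarrow> bool list) \<Rightarrow> ('z \<Rightarrow> 'x \<Rightarrow> 'z) \<Rightarrow> bool" where
  "info_lossless f g \<longleftrightarrow>
     (\<forall>z n. n \<ge> 1 \<longrightarrow> inj_on (\<lambda>xs. (fs_out f g z xs, fs_next g z xs)) {xs. length xs = n})"

definition kraft_matrix :: "('z \<Rightarrow> 'x::finite \<Rightarrow> bool list) \<Rightarrow> ('z \<Rightarrow> 'x \<Rightarrow> 'z) \<Rightarrow> 'z \<Rightarrow> 'z \<Rightarrow> real" where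
  "kraft_matrix f g z z' = (\<Sum>x\<in>{x. g z x = z'}. (1/2::real) ^ length (f z x))"

primrec mat_pow :: "('z::finite \<Rightarrow> 'z \<Rightarrow> real) \<Rightarrow> nat \<Rightarrow> 'z \<Rightarrow> 'z \<Rightarrow> real" where
  "mat_pow K 0 = (\<lambda>z z'. if z = z' then 1 else 0)"
| "mat_pow K (Suc n) = (\<lambda>z z'. \<Sum>w\<in>UNIV. mat_pow K n z w * K w z')"

definition irreducible_mat :: "('z::finite \<Rightarrow> 'z \<Rightarrow> real) \<Rightarrow> bool" where
  "irreducible_mat K \<longleftrightarrow> (\<forall>z z'. \<exists>m. mat_pow K m z z' > 0)"

definition L_max :: "('z::finite \<Rightarrow> 'x::finite \<Rightarrow> bool list) \<Rightarrow> nat" where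
  "L_max f = Max {length (f z x) | z x. True}"

end

theory Submission
  imports Defs
begin

lemma fs_next_append: "fs_next g z (xs@ys) = fs_next g (fs_next g z xs) ys"
  by (induction xs arbitrary: z) auto

lemma fs_out_append: "fs_out f g z (xs@ys) = fs_out f g z xs @ fs_out f g (fs_next g z xs) ys"
  by (induction xs arbitrary: z) auto

lemma finite_len: "finite {xs::'x::finite list. length xs = n}"
  using finite_lists_length_eq[of "UNIV::'x set" n] by simp

lemma snoc_image: "{ys::'x list. length ys = Suc n} = (\<lambda>(xs,x). xs@[x]) ` ({xs. length xs = n} \<times> UNIV)"
proof (rule set_eqI, rule iffI)
  fix ys :: "'x list" assume "ys \<in> {ys. length ys = Suc n}"
  then have "ys \<noteq> []" "length (butlast ys) = n" by auto
  then have "ys = (\<lambda>(xs,x). xs@[x]) (butlast ys, last ys)" by simp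
  then show "ys \<in> (\<lambda>(xs,x). xs@[x]) ` ({xs. length xs = n} \<times> UNIV)"
    using \<open>length (butlast ys) = n\<close> by blast
qed auto

lemma snoc_inj: "inj_on (\<lambda>(xs,x). xs@[x]) A"
  by (auto simp: inj_on_def)

lemma mat_pow_paths:
  fixes f :: "'z::finite \<Rightarrow> 'x::finite \<Rightarrow> bool list"
  shows "mat_pow (kraft_matrix f g) n z z' = (\<Sum>xs\<in>{xs. length xs = n}.
     if fs_next g z xs = z' then (1/2::real)^length (fs_out f g z xs) else 0)"
proof (induction n arbitrary: z')
  case 0
  have "{xs::'x list. length xs = 0} = {[]}" by auto
  then show ?case by simp
next
  case (Suc n)
  let ?W = "\<lambda>xs. (1/2::real)^length (fs_out f g z xs)"
  let ?K = "kraft_matrix f g"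
  let ?h = "\<lambda>ys. if fs_next g z ys = z' then ?W ys else 0"
  have "mat_pow ?K (Suc n) z z' = (\<Sum>w\<in>UNIV. mat_pow ?K n z w * ?K w z')" by simp
  also have "\<dots> = (\<Sum>w\<in>UNIV. \<Sum>xs\<in>{xs. length xs = n}. if fs_next g z xs = w then ?W xs * ?K w z' else 0)"
    by (auto simp: Suc.IH sum_distrib_right intro!: sum.cong)
  also have "\<dots> = (\<Sum>xs\<in>{xs. length xs = n}. \<Sum>w\<in>UNIV. if fs_next g z xs = w then ?W xs * ?K w z' else 0)"
    by (rule sum.swap)
  also have "\<dots> = (\<Sum>xs\<in>{xs. length xs = n}. ?W xs * ?K (fs_next g z xs) z')"
    by simp
  also have "\<dots> = (\<Sum>xs\<in>{xs. length xs = n}. \<Sum>x\<in>UNIV. ?h (xs@[x]))"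
  proof (rule sum.cong[OF refl])
    fix xs :: "'x list"
    have "?W xs * ?K (fs_next g z xs) z' = (\<Sum>x\<in>{x. g (fs_next g z xs) x = z'}. ?W xs * (1/2)^length (f (fs_next g z xs) x))"
      unfolding kraft_matrix_def by (simp add: sum_distrib_left)
    also have "\<dots> = (\<Sum>x\<in>UNIV. if g (fs_next g z xs) x = z' then ?W xs * (1/2)^length (f (fs_next g z xs) x) else 0)"
      by (simp add: sum.If_cases Int_def)
    also have "\<dots> = (\<Sum>x\<in>UNIV. ?h (xs@[x]))"
      by (rule sum.cong[OF refl]) (simp add: fs_next_append fs_out_append power_add)
    finally show "?W xs * ?K (fs_next g z xs) z' = (\<Sum>x\<in>UNIV. ?h (xs@[x]))" .
  qed
  also have "\<dots> = (\<Sum>p\<in>{xs. length xs = n} \<times> UNIV. ?h ((\<lambda>(xs,x). xs@[x]) p))"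
    by (simp add: sum.cartesian_product split_beta cong: if_cong)
  also have "\<dots> = (\<Sum>ys\<in>{ys. length ys = Suc n}. ?h ys)"
    unfolding snoc_image by (simp add: sum.reindex[OF snoc_inj] o_def)
  finally show ?case .
qed


lemma Lmax_ge: "length (f z x) \<le> L_max (f :: 'z::finite \<Rightarrow> 'x::finite \<Rightarrow> bool list)"
proof -
  have "{length (f z x) | z x. True} = (\<lambda>(z,x). length (f z x)) ` UNIV" by auto
  then have "finite {length (f z x) | z x. True}" by simp
  then show ?thesis unfolding L_max_def by (rule Max_ge) auto
qed

lemma out_len: "length (fs_out f g z xs) \<le> length xs * L_max (f :: 'z::finite \<Rightarrow> 'x::finite \<Rightarrow> bool list)"
proof (induction xs arbitrary: z)
  case (Cons x xs)
  have "length (f z x) \<le> L_max f" by (rule Lmax_ge)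
  then show ?case using Cons[of "g z x"] by simp
qed simp

lemma sum_bool_lists: "(\<Sum>t\<in>{t::bool list. length t \<le> M}. (1/2::real)^length t) = real M + 1"
proof (induction M)
  case 0
  have "{t::bool list. length t \<le> 0} = {[]}" by auto
  then show ?case by simp
next
  case (Suc M)
  have fin: "finite {t::bool list. length t \<le> M}"
    using finite_lists_length_le[of "UNIV::bool set" M] by simp
  have fin2: "finite {t::bool list. length t = Suc M}"
    using finite_lists_length_eq[of "UNIV::bool set" "Suc M"] by simp
  have card2: "card {t::bool list. length t = Suc M} = 2 ^ Suc M"
    using card_lists_length_eq[of "UNIV::bool set" "Suc M"] by simp
  have eq: "{t::bool list. length t \<le> Suc M} = {t. length t \<le> M} \<union> {t. length t = Suc M}" by auto
  have "(\<Sum>t\<in>{t::bool list. length t \<le> Suc M}. (1/2::real)^length t)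
      = (\<Sum>t\<in>{t::bool list. length t \<le> M}. (1/2::real)^length t) + (\<Sum>t\<in>{t::bool list. length t = Suc M}. (1/2::real)^length t)"
    unfolding eq by (rule sum.union_disjoint[OF fin fin2]) auto
  also have "(\<Sum>t\<in>{t::bool list. length t = Suc M}. (1/2::real)^length t) = (\<Sum>t\<in>{t::bool list. length t = Suc M}. (1/2::real)^Suc M)"
    by (rule sum.cong) auto
  also have "\<dots> = 1" using card2 by (simp add: power_one_over)
  finally show ?case using Suc by simp
qed

lemma kraft_bound:
  fixes f :: "'z::finite \<Rightarrow> 'x::finite \<Rightarrow> bool list"
  assumes il: "info_lossless f g"
  shows "(\<Sum>xs\<in>{xs. length xs = N}. if fs_next g z xs = z'' then (1/2::real)^length (fs_out f g z xs) else 0)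
         \<le> real N * real (L_max f) + 1"
proof -
  let ?S = "{xs::'x list. length xs = N \<and> fs_next g z xs = z''}"
  have finS: "finite ?S" by (rule finite_subset[OF _ finite_len[of N]]) auto
  have "(\<Sum>xs\<in>{xs. length xs = N}. if fs_next g z xs = z'' then (1/2::real)^length (fs_out f g z xs) else 0)
      = (\<Sum>xs\<in>?S. (1/2::real)^length (fs_out f g z xs))"
    by (simp add: sum.If_cases finite_len Int_def conj_commute)
  also have "\<dots> \<le> real N * real (L_max f) + 1"
  proof (cases "N = 0")
    case True
    then have "?S \<subseteq> {[]}" by auto
    then have "(\<Sum>xs\<in>?S. (1/2::real)^length (fs_out f g z xs)) \<le> (\<Sum>xs\<in>{[]}. (1/2::real)^length (fs_out f g z xs))"
      by (intro sum_mono2) auto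
    then have "(\<Sum>xs\<in>?S. (1/2::real)^length (fs_out f g z xs)) \<le> 1" by simp
    moreover have "0 \<le> real N * real (L_max f)" by simp
    ultimately show ?thesis by linarith
  next
    case False
    have "inj_on (\<lambda>xs. (fs_out f g z xs, fs_next g z xs)) {xs. length xs = N}"
      using il False unfolding info_lossless_def by auto
    then have inj: "inj_on (fs_out f g z) ?S" by (auto simp: inj_on_def)
    have "(\<Sum>xs\<in>?S. (1/2::real)^length (fs_out f g z xs)) = (\<Sum>t\<in>fs_out f g z ` ?S. (1/2::real)^length t)"
      by (simp add: sum.reindex[OF inj])
    also have "\<dots> \<le> (\<Sum>t\<in>{t::bool list. length t \<le> N * L_max f}. (1/2::real)^length t)"
    proof (rule sum_mono2)
      show "finite {t::bool list. length t \<le> N * L_max f}"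
        using finite_lists_length_le[of "UNIV::bool set"] by simp
      show "fs_out f g z ` ?S \<subseteq> {t. length t \<le> N * L_max f}"
        using out_len[of f g z] by auto
    qed auto
    also have "\<dots> = real N * real (L_max f) + 1" by (simp add: sum_bool_lists)
    finally show ?thesis .
  qed
  finally show ?thesis .
qed


lemma mat_pow_add: "mat_pow K (a + b) i j = (\<Sum>w\<in>UNIV. mat_pow K a i w * mat_pow K b w j)"
proof (induction b arbitrary: j)
  case 0
  show ?case by (simp add: if_distrib cong: if_cong)
next
  case (Suc b)
  have "mat_pow K (a + Suc b) i j = (\<Sum>v\<in>UNIV. mat_pow K (a+b) i v * K v j)" by simp
  also have "\<dots> = (\<Sum>v\<in>UNIV. \<Sum>w\<in>UNIV. mat_pow K a i w * mat_pow K b w v * K v j)"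
    by (simp add: Suc.IH sum_distrib_right)
  also have "\<dots> = (\<Sum>w\<in>UNIV. \<Sum>v\<in>UNIV. mat_pow K a i w * mat_pow K b w v * K v j)"
    by (rule sum.swap)
  also have "\<dots> = (\<Sum>w\<in>UNIV. mat_pow K a i w * mat_pow K (Suc b) w j)"
    by (simp add: sum_distrib_left mult.assoc)
  finally show ?case .
qed

lemma mat_pow_nonneg:
  fixes f :: "'z::finite \<Rightarrow> 'x::finite \<Rightarrow> bool list"
  shows "0 \<le> mat_pow (kraft_matrix f g) n i j"
  unfolding mat_pow_paths by (rule sum_nonneg) auto

lemma mat_pow_super:
  fixes f :: "'z::finite \<Rightarrow> 'x::finite \<Rightarrow> bool list"
  shows "mat_pow (kraft_matrix f g) a i w * mat_pow (kraft_matrix f g) b w j \<le> mat_pow (kraft_matrix f g) (a + b) i j"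
  unfolding mat_pow_add[of _ a b]
  by (rule member_le_sum) (auto intro: mult_nonneg_nonneg mat_pow_nonneg)

lemma mat_pow_power:
  fixes f :: "'z::finite \<Rightarrow> 'x::finite \<Rightarrow> bool list"
  shows "(mat_pow (kraft_matrix f g) N z z) ^ k \<le> mat_pow (kraft_matrix f g) (k * N) z z"
proof (induction k)
  case 0
  then show ?case by simp
next
  case (Suc k)
  let ?A = "mat_pow (kraft_matrix f g) N z z"
  have "?A ^ Suc k = ?A * ?A ^ k" by simp
  also have "\<dots> \<le> ?A * mat_pow (kraft_matrix f g) (k * N) z z"
    by (rule mult_left_mono[OF Suc mat_pow_nonneg])
  also have "\<dots> \<le> mat_pow (kraft_matrix f g) (N + k * N) z z" by (rule mat_pow_super)
  finally show ?case by (simp add: add.commute)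
qed

lemma pow_poly_bound:
  fixes A C :: real
  assumes "0 \<le> C" and bd: "\<And>k. A ^ k \<le> real k * C + 1"
  shows "A \<le> 1"
proof (rule ccontr)
  assume "\<not> A \<le> 1"
  then have A1: "1 < A" by simp
  have lim: "(\<lambda>k. real k / A ^ k) \<longlonglongrightarrow> 0"
    using lim_n_over_pown[of A] A1 by simp
  have "0 < 1 / (C + 1)" using assms(1) by simp
  from order_tendstoD(2)[OF lim this] obtain k0 where k0: "\<And>k. k \<ge> k0 \<Longrightarrow> real k / A ^ k < 1 / (C + 1)"
    unfolding eventually_sequentially by blast
  define k where "k = max k0 1"
  have "real k / A ^ k < 1 / (C + 1)" using k0 k_def by simp
  moreover have pos: "0 < A ^ k" using A1 by simp
  ultimately have "real k * (C + 1) < A ^ k"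
    using assms(1) by (simp add: field_simps)
  moreover have "real k \<ge> 1" using k_def by simp
  ultimately have "real k * C + 1 < A ^ k" by (simp add: algebra_simps)
  with bd[of k] show False by simp
qed

lemma shorten_path:
  fixes g :: "'z::finite \<Rightarrow> 'x \<Rightarrow> 'z"
  shows "fs_next g a xs = b \<Longrightarrow> \<exists>ys. length ys < CARD('z) \<and> fs_next g a ys = b"
proof (induction "length xs" arbitrary: xs rule: less_induct)
  case less
  show ?case
  proof (cases "length xs < CARD('z)")
    case True
    then show ?thesis using less.prems by blast
  next
    case False
    let ?phi = "\<lambda>i. fs_next g a (take i xs)"
    have "\<not> inj_on ?phi {0..length xs}"
    proof
      assume "inj_on ?phi {0..length xs}"
      then have "card {0..length xs} \<le> card (UNIV :: 'z set)"
        by (rule card_inj_on_le) auto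
      then show False using False by simp
    qed
    then obtain i j where ij: "i \<le> length xs" "j \<le> length xs" "i \<noteq> j" "?phi i = ?phi j"
      unfolding inj_on_def by auto
    obtain i' j' where ij': "i' < j'" "j' \<le> length xs" "?phi i' = ?phi j'"
    proof (cases "i < j")
      case True
      then show ?thesis using that ij by blast
    next
      case False
      then have "j < i" using ij by simp
      then show ?thesis using that ij by metis
    qed
    define ys where "ys = take i' xs @ drop j' xs"
    have len: "length ys < length xs" using ij' unfolding ys_def by simp
    have "fs_next g a ys = fs_next g (?phi j') (drop j' xs)"
      unfolding ys_def fs_next_append using ij' by simp
    also have "\<dots> = fs_next g a xs"
      by (metis append_take_drop_id fs_next_append)
    finally have "fs_next g a ys = b" using less.prems by simp
    then show ?thesis using less.hyps[OF len] by blast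
  qed
qed


lemma entry_bound:
  fixes f :: "'z::finite \<Rightarrow> 'x::finite \<Rightarrow> bool list" and g :: "'z \<Rightarrow> 'x \<Rightarrow> 'z"
  assumes il: "info_lossless f g"
    and irr: "irreducible_mat (kraft_matrix f g)"
  shows "mat_pow (kraft_matrix f g) n z z' \<le> (2::real) ^ ((CARD('z) - 1) * L_max f)"
proof -
  let ?K = "kraft_matrix f g"
  let ?W = "\<lambda>a xs. (1/2::real)^length (fs_out f g a xs)"
  obtain m0 where "mat_pow ?K m0 z' z > 0" using irr unfolding irreducible_mat_def by blast
  then have "(\<Sum>xs\<in>{xs. length xs = m0}. if fs_next g z' xs = z then ?W z' xs else 0) \<noteq> 0"
    unfolding mat_pow_paths by simp
  then have "\<exists>xs0. fs_next g z' xs0 = z"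
  proof (rule contrapos_np)
    assume "\<not> (\<exists>xs0. fs_next g z' xs0 = z)"
    then show "(\<Sum>xs\<in>{xs. length xs = m0}. if fs_next g z' xs = z then ?W z' xs else 0) = 0" by simp
  qed
  then obtain xs0 where "fs_next g z' xs0 = z" by blast
  then obtain ys where ys: "length ys < CARD('z)" "fs_next g z' ys = z" using shorten_path by blast
  define m where "m = length ys"
  have "(1/2::real)^(m * L_max f) \<le> ?W z' ys"
    using out_len[of f g z' ys] unfolding m_def by (intro power_decreasing) auto
  also have "\<dots> \<le> mat_pow ?K m z' z"
    unfolding mat_pow_paths using ys by (intro member_le_sum[where i=ys, THEN order_trans[rotated]]) (auto simp: m_def finite_len)
  finally have lowb: "(1/2::real)^(m * L_max f) \<le> mat_pow ?K m z' z" .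
  let ?A = "mat_pow ?K (n + m) z z"
  have "?A \<le> 1"
  proof (rule pow_poly_bound[where C = "real (n+m) * real (L_max f)"])
    fix k
    have "?A ^ k \<le> mat_pow ?K (k * (n+m)) z z" by (rule mat_pow_power)
    also have "\<dots> \<le> real (k * (n+m)) * real (L_max f) + 1"
      unfolding mat_pow_paths by (rule kraft_bound[OF il])
    finally show "?A ^ k \<le> real k * (real (n + m) * real (L_max f)) + 1" by (simp add: mult.assoc)
  qed simp
  let ?P = "mat_pow ?K n z z'"
  have "?P * (1/2::real)^(m * L_max f) \<le> ?P * mat_pow ?K m z' z"
    by (rule mult_left_mono[OF lowb mat_pow_nonneg])
  also have "\<dots> \<le> ?A" by (rule mat_pow_super)
  finally have "?P * (1/2::real)^(m * L_max f) \<le> 1" using \<open>?A \<le> 1\<close> by simp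
  then have "?P \<le> 2 ^ (m * L_max f)" by (simp add: power_one_over field_simps)
  also have "\<dots> \<le> 2 ^ ((CARD('z) - 1) * L_max f)"
    using ys(1) unfolding m_def by (intro power_increasing) auto
  finally show ?thesis .
qed

theorem theorem2:
  fixes f :: "'z::finite \<Rightarrow> 'x::finite \<Rightarrow> bool list" and g :: "'z \<Rightarrow> 'x \<Rightarrow> 'z"
  assumes "info_lossless f g"
    and "irreducible_mat (kraft_matrix f g)"
  shows "(\<forall>z z' n. n \<ge> 1 \<longrightarrow>
            mat_pow (kraft_matrix f g) n z z'
              = (\<Sum>xs\<in>{xs. length xs = n \<and> fs_next g z xs = z'}. (1/2::real) ^ length (fs_out f g z xs))
          \<and> mat_pow (kraft_matrix f g) n z z' \<le> (2::real) ^ ((CARD('z) - 1) * L_max f))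
       \<and> (\<forall>z n. n \<ge> 1 \<longrightarrow>
            (\<Sum>xs\<in>{xs. length xs = n}. (1/2::real) ^ length (fs_out f g z xs))
              \<le> real CARD('z) * 2 ^ ((CARD('z) - 1) * L_max f))
       \<and> (\<forall>n. n \<ge> 1 \<longrightarrow>
            (\<Sum>z\<in>UNIV. \<Sum>xs\<in>{xs. length xs = n}. (1/2::real) ^ length (fs_out f g z xs))
              \<le> real CARD('z) ^ 2 * 2 ^ ((CARD('z) - 1) * L_max f))"
proof -
  let ?B = "(2::real) ^ ((CARD('z) - 1) * L_max f)"
  let ?W = "\<lambda>z xs. (1/2::real)^length (fs_out f g z xs)"
  have rowsum: "(\<Sum>xs\<in>{xs. length xs = n}. ?W z xs) \<le> real CARD('z) * ?B" for z n
  proof -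
    have "(\<Sum>xs\<in>{xs. length xs = n}. ?W z xs)
        = (\<Sum>xs\<in>{xs. length xs = n}. \<Sum>z'\<in>UNIV. if fs_next g z xs = z' then ?W z xs else 0)"
      by simp
    also have "\<dots> = (\<Sum>z'\<in>UNIV. mat_pow (kraft_matrix f g) n z z')"
      unfolding mat_pow_paths by (rule sum.swap)
    also have "\<dots> \<le> (\<Sum>z'\<in>(UNIV::'z set). ?B)"
      by (rule sum_mono) (rule entry_bound[OF assms])
    finally show ?thesis by simp
  qed
  have A: "mat_pow (kraft_matrix f g) n z z'
              = (\<Sum>xs\<in>{xs. length xs = n \<and> fs_next g z xs = z'}. ?W z xs)" for n z z'
    unfolding mat_pow_paths by (simp add: sum.If_cases finite_len Int_def conj_commute)
  have C: "(\<Sum>z\<in>UNIV. \<Sum>xs\<in>{xs. length xs = n}. ?W z xs) \<le> real CARD('z) ^ 2 * ?B" for n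
  proof -
    have "(\<Sum>z\<in>UNIV. \<Sum>xs\<in>{xs. length xs = n}. ?W z xs) \<le> (\<Sum>z\<in>(UNIV::'z set). real CARD('z) * ?B)"
      by (rule sum_mono) (rule rowsum)
    then show ?thesis by (simp add: power2_eq_square mult.assoc)
  qed
  show ?thesis using A entry_bound[OF assms] rowsum C by blast
qed

end
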